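(* Let $\beta\in(0,2]$ and, on the open subset $U\subset H^3$ where the geodesic polar coordinates $(r,\theta,\phi)$ with $r>0$, $\theta\in(0,\pi)$ are valid (so $g_{H^3}=\mathrm{d}r^2+\sinh^2 r(\mathrm{d}\theta^2+\sin^2\theta\,\mathrm{d}\phi^2)$), define $$\mathcal{A}=\frac{\mathbf{i}}{2}\cos\theta\,\mathrm{d}\phi+\frac{2(\beta-1)\,\mathrm{e}^{2r}\sinh r}{\mathrm{e}^{4r}-(\beta-1)^2}\left(\mathbf{j}\sin\theta\,\mathrm{d}\phi-\mathbf{k}\,\mathrm{d}\theta\right),$$ $$\Phi=\frac{\mathbf{i}}{4}(1-\coth r)\,\frac{(\beta-1)^2(1-3\mathrm{e}^{2r})-\mathrm{e}^{6r}(1-3\mathrm{e}^{-2r})}{\mathrm{e}^{4r}-(\beta-1)^2}.$$ Then $(\Phi,\mathcal{A})$ satisfies the Bogomolny equations $\mathrm{d}_{\mathcal{A}}\Phi=-\ast_{H^3}\mathcal{F}$ on $U$, where $\mathcal{F}$ is the curvature of $\mathcal{A}$. Moreover $\|\Phi\|\to\tfrac12$ as $r\to\infty$.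
   Context: $\mathfrak{su}(2)$ is identified with the imaginary quaternions spanned by $\mathbf{i},\mathbf{j},\mathbf{k}$, with inner product $\langle X,Y\rangle=-\tfrac12\mathrm{Tr}(XY)$ (so $\|\mathbf{i}\|=1$). $\mathrm{d}_{\mathcal{A}}\Phi=\mathrm{d}\Phi+[\mathcal{A},\Phi]$ with $[X,Y]=XY-YX$, and $\mathcal{F}=\mathrm{d}\mathcal{A}+\mathcal{A}\wedge\mathcal{A}$. $\ast_{H^3}$ is the Hodge star of $g_{H^3}$ with orientation given by $\sinh^2 r\sin\theta\,\mathrm{d}r\wedge\mathrm{d}\theta\wedge\mathrm{d}\phi$. *)

theory Defs
  imports "HOL-Analysis.Analysis"
begin

text \<open>The Lie algebra su(2) (imaginary quaternions a i + b j + c k) is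
represented by its coefficient vectors in real^3: i, j, k are the standard basis vectors.
Then the commutator [X,Y] = XY - YX of imaginary quaternions is 2 (X cross Y), and the
norm for the inner product -1/2 Tr(XY) is the Euclidean norm of the coefficient vector.\<close>

type_synonym su2 = "real^3"

definition qi :: su2 where "qi = axis 1 1"
definition qj :: su2 where "qj = axis 2 1"
definition qk :: su2 where "qk = axis 3 1"

definition lie_bracket :: "su2 \<Rightarrow> su2 \<Rightarrow> su2" where
  "lie_bracket X Y = 2 *\<^sub>R cross3 X Y"

text \<open>Coordinates: a point p :: real^3 has coordinates (p$1, p$2, p$3) = (r, theta, phi).
An su(2)-valued function is  real^3 \<Rightarrow> su2; an su(2)-valued 1-form is given by its
components  A p a  (coefficient of dx_a); a 2-form by its components  F p a b
(antisymmetric, F = 1/2 sum F_ab dx_a wedge dx_b).\<close>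

definition pd :: "3 \<Rightarrow> (real^3 \<Rightarrow> 'b::real_normed_vector) \<Rightarrow> real^3 \<Rightarrow> 'b" where
  "pd i f p = vector_derivative (\<lambda>t. f (p + t *\<^sub>R axis i 1)) (at 0)"

definition cov_deriv :: "(real^3 \<Rightarrow> 3 \<Rightarrow> su2) \<Rightarrow> (real^3 \<Rightarrow> su2) \<Rightarrow> real^3 \<Rightarrow> 3 \<Rightarrow> su2" where
  "cov_deriv A Phi p a = pd a Phi p + lie_bracket (A p a) (Phi p)"

definition curvature :: "(real^3 \<Rightarrow> 3 \<Rightarrow> su2) \<Rightarrow> real^3 \<Rightarrow> 3 \<Rightarrow> 3 \<Rightarrow> su2" where
  "curvature A p a b = pd a (\<lambda>q. A q b) p - pd b (\<lambda>q. A q a) p + lie_bracket (A p a) (A p b)"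

definition levi_civita :: "3 \<Rightarrow> 3 \<Rightarrow> 3 \<Rightarrow> real" where
  "levi_civita a b c =
     (if (a, b, c) \<in> {(1, 2, 3), (2, 3, 1), (3, 1, 2)} then 1
      else if (a, b, c) \<in> {(1, 3, 2), (3, 2, 1), (2, 1, 3)} then -1 else 0)"

text \<open>Hodge star of a 2-form for a Riemannian metric g (matrix of components g_ab in the
coordinates), with orientation dx_1 wedge dx_2 wedge dx_3:
 (*F)_a = 1/2 sqrt(det g) sum_{b,c} eps_abc F^bc,  F^bc = g^bb' g^cc' F_b'c'.\<close>
definition hodge2 :: "(real^3 \<Rightarrow> real^3^3) \<Rightarrow> (real^3 \<Rightarrow> 3 \<Rightarrow> 3 \<Rightarrow> su2) \<Rightarrow> real^3 \<Rightarrow> 3 \<Rightarrow> su2" where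
  "hodge2 g F p a =
     (let gi = matrix_inv (g p) in
      (sqrt (det (g p)) / 2) *\<^sub>R
        (\<Sum>b\<in>UNIV. \<Sum>c\<in>UNIV. levi_civita a b c *\<^sub>R
          (\<Sum>b'\<in>UNIV. \<Sum>c'\<in>UNIV. (gi $ b $ b' * gi $ c $ c') *\<^sub>R F p b' c')))"

definition g_H3 :: "real^3 \<Rightarrow> real^3^3" where
  "g_H3 p = (\<chi> a b. if a = b then
       (if a = 1 then 1 else if a = 2 then (sinh (p$1))\<^sup>2
        else (sinh (p$1))\<^sup>2 * (sin (p$2))\<^sup>2) else 0)"

definition U_polar :: "(real^3) set" where
  "U_polar = {p. 0 < p$1 \<and> 0 < p$2 \<and> p$2 < pi}"

end

theory Submission
  imports Defs "HOL-Real_Asymp.Real_Asymp"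
begin


lemma pd_at: "((\<lambda>t. g (p + t *\<^sub>R axis i 1)) has_vector_derivative D) (at 0) \<Longrightarrow> pd i g p = D"
  by (simp add: pd_def vector_derivative_at)

lemma pd_const: assumes "\<And>t. g (p + t *\<^sub>R axis i 1) = g p" shows "pd i g p = 0"
proof -
  have "(\<lambda>t. g (p + t *\<^sub>R axis i 1)) = (\<lambda>t. g p)" using assms by (rule ext)
  then show ?thesis by (intro pd_at) (simp only: has_vector_derivative_const)
qed

lemma pd_shift2:
  fixes Ga Gb :: "real \<Rightarrow> real"
  assumes "\<And>t. g (p + t *\<^sub>R axis i 1) = Ga (p$i + t) *\<^sub>R va + Gb (p$i + t) *\<^sub>R vb"
    "(Ga has_real_derivative Ga') (at (p$i))" "(Gb has_real_derivative Gb') (at (p$i))"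
  shows "pd i g p = Ga' *\<^sub>R va + Gb' *\<^sub>R vb"
proof (rule pd_at)
  have s: "((\<lambda>t. p$i + t) has_real_derivative 1) (at 0)"
    by (rule derivative_eq_intros refl)+ simp
  have a2: "(Ga has_real_derivative Ga') (at ((\<lambda>t. p$i + t) 0))"
     "(Gb has_real_derivative Gb') (at ((\<lambda>t. p$i + t) 0))" using assms(2,3) by simp_all
  have d1: "((\<lambda>t. Ga (p$i + t)) has_real_derivative Ga') (at 0)"
    using DERIV_chain2[OF a2(1) s] by simp
  have d2: "((\<lambda>t. Gb (p$i + t)) has_real_derivative Gb') (at 0)"
    using DERIV_chain2[OF a2(2) s] by simp
  have "((\<lambda>t. Ga (p$i + t) *\<^sub>R va + Gb (p$i + t) *\<^sub>R vb) has_vector_derivative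
     (Ga (p$i+0) *\<^sub>R 0 + Ga' *\<^sub>R va) + (Gb (p$i+0) *\<^sub>R 0 + Gb' *\<^sub>R vb)) (at 0)"
    by (intro has_vector_derivative_add has_vector_derivative_scaleR d1 d2 has_vector_derivative_const)
  then show "((\<lambda>t. g (p + t *\<^sub>R axis i 1)) has_vector_derivative Ga' *\<^sub>R va + Gb' *\<^sub>R vb) (at 0)"
    by (simp add: assms(1))
qed

lemma prod_3: "prod f (UNIV::3 set) = f 1 * f 2 * f 3"
  unfolding UNIV_3 by (simp add: ac_simps)

lemma comp_shift: "(p + t *\<^sub>R axis i 1) $ j = (if j = i then p$j + t else p$j)"
  by (simp add: axis_def)

lemma diag_sum: "(\<Sum>k\<in>(UNIV::'a::finite set). (if i = k then c else 0) * (if k = j then b k else (0::real))) = (if i = j then c * b i else 0)"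
proof -
  have "(\<Sum>k\<in>UNIV. (if i = k then c else 0) * (if k = j then b k else (0::real)))
      = (\<Sum>k\<in>UNIV. if k = i then (if i = j then c * b i else 0) else 0)"
    by (rule sum.cong) auto
  also have "\<dots> = (if i = j then c * b i else 0)"
    using sum.delta[of "UNIV::'a set" i "\<lambda>_. (if i = j then c * b i else 0)"] by simp
  finally show ?thesis .
qed

lemma matrix_inv_diag:
  fixes d :: "'n::finite \<Rightarrow> real"
  assumes "\<And>i. d i \<noteq> 0"
  shows "matrix_inv (\<chi> i j. if i = j then d i else 0) = (\<chi> i j. if i = j then 1 / d i else 0)"
proof -
  let ?A = "(\<chi> i j. if i = j then d i else 0) :: real^'n^'n"
  let ?B = "(\<chi> i j. if i = j then 1 / d i else 0) :: real^'n^'n"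
  have AB: "?A ** ?B = mat 1" using assms
    unfolding vec_eq_iff matrix_matrix_mult_def mat_def vec_lambda_beta diag_sum by simp
  have BA: "?B ** ?A = mat 1" using assms
    unfolding vec_eq_iff matrix_matrix_mult_def mat_def vec_lambda_beta diag_sum by simp
  show ?thesis unfolding matrix_inv_def
  proof (rule some_equality)
    show "?A ** ?B = mat 1 \<and> ?B ** ?A = mat 1" using AB BA by simp
  next
    fix C assume "?A ** C = mat 1 \<and> C ** ?A = mat 1"
    then have CA: "C ** ?A = mat 1" by simp
    have "C = C ** (?A ** ?B)" by (simp only: AB matrix_mul_rid)
    also have "\<dots> = (C ** ?A) ** ?B" by (rule matrix_mul_assoc)
    also have "\<dots> = ?B" by (simp only: CA matrix_mul_lid)
    finally show "C = ?B" .
  qed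
qed


lemma coef_sc: "k * x = c \<Longrightarrow> k * y = c \<Longrightarrow> k *\<^sub>R (x *\<^sub>R X - y *\<^sub>R Y) = c *\<^sub>R (X - Y)"
  for X Y :: "'a::real_vector"
  by (simp add: scaleR_right_diff_distrib)

lemma hodge_H3:
  assumes "p \<in> U_polar"
  shows "hodge2 g_H3 F p 1 = (1 / (2 * (sinh (p$1))^2 * sin (p$2))) *\<^sub>R (F p 2 3 - F p 3 2)"
    and "hodge2 g_H3 F p 2 = (1 / (2 * sin (p$2))) *\<^sub>R (F p 3 1 - F p 1 3)"
    and "hodge2 g_H3 F p 3 = (sin (p$2) / 2) *\<^sub>R (F p 1 2 - F p 2 1)"
proof -
  define S where "S = sinh (p$1)"
  define s where "s = sin (p$2)"
  have S: "S > 0" using assms by (simp add: S_def U_polar_def)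
  have s: "s > 0" using assms by (simp add: s_def U_polar_def sin_gt_zero)
  define dd :: "3 \<Rightarrow> real" where "dd a = (if a = 1 then 1 else if a = 2 then S^2 else S^2 * s^2)" for a
  have g: "g_H3 p = (\<chi> a b. if a = b then dd a else 0)"
    by (simp add: g_H3_def dd_def S_def s_def vec_eq_iff)
  have ddnz: "\<And>a. dd a \<noteq> 0" using S s by (simp add: dd_def)
  have gi: "matrix_inv (g_H3 p) = (\<chi> a b. if a = b then 1 / dd a else 0)"
    unfolding g by (rule matrix_inv_diag[OF ddnz])
  have det: "det (g_H3 p) = (S^2 * s)^2"
  proof -
    have "det (g_H3 p) = prod dd UNIV" unfolding g by (subst det_diagonal) simp_all
    also have "\<dots> = dd 1 * dd 2 * dd 3" by (rule prod_3)
    also have "\<dots> = (S^2 * s)^2" by (simp add: dd_def power2_eq_square)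
    finally show ?thesis .
  qed
  have sq: "sqrt (det (g_H3 p)) = S^2 * s" unfolding det using S s by simp
  have dd: "dd 1 = 1" "dd 2 = S^2" "dd 3 = S^2 * s^2" by (simp_all add: dd_def)
  show "hodge2 g_H3 F p 1 = (1 / (2 * (sinh (p$1))^2 * sin (p$2))) *\<^sub>R (F p 2 3 - F p 3 2)"
    unfolding hodge2_def Let_def gi sq S_def[symmetric] s_def[symmetric]
    apply (simp add: sum_3 levi_civita_def dd)
    apply (rule coef_sc) using S s by (simp_all add: field_simps power2_eq_square eval_nat_numeral)
  show "hodge2 g_H3 F p 2 = (1 / (2 * sin (p$2))) *\<^sub>R (F p 3 1 - F p 1 3)"
    unfolding hodge2_def Let_def gi sq S_def[symmetric] s_def[symmetric]
    apply (simp add: sum_3 levi_civita_def dd)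
    apply (rule coef_sc) using S s by (simp_all add: field_simps power2_eq_square eval_nat_numeral)
  show "hodge2 g_H3 F p 3 = (sin (p$2) / 2) *\<^sub>R (F p 1 2 - F p 2 1)"
    unfolding hodge2_def Let_def gi sq S_def[symmetric] s_def[symmetric]
    apply (simp add: sum_3 levi_civita_def dd)
    apply (rule coef_sc) using S s by (simp_all add: field_simps power2_eq_square eval_nat_numeral)
qed

definition fF :: "real \<Rightarrow> real \<Rightarrow> real" where
  "fF m r = 2 * m * exp (2 * r) * sinh r / (exp (4 * r) - m\<^sup>2)"
definition hH :: "real \<Rightarrow> real \<Rightarrow> real" where
  "hH m r = (1 / 4) * (1 - cosh r / sinh r) *
     ((m\<^sup>2 * (1 - 3 * exp (2 * r)) - exp (6 * r) * (1 - 3 * exp (- 2 * r))) / (exp (4 * r) - m\<^sup>2))"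

lemma F_id0:
  fixes x m d e :: real assumes "e \<noteq> 0" "d \<noteq> 0" and de: "e = x^2-1" "d = x^4-m^2"
  shows "m * ((3*x^2 - 1) * d - x*e*(4*x^3)) / d^2 * x
     = -2 * (m*x*e/d) * ((x^6 - 3*x^4 + 3*m^2*x^2 - m^2)/(2*e*d))"
  using assms(1,2) apply (simp add: field_simps power2_eq_square)
  apply (simp only: de) by algebra
lemma H_id0:
  fixes x m d e :: real assumes "e \<noteq> 0" "d \<noteq> 0" "x \<noteq> 0" and de: "e = x^2-1" "d = x^4-m^2"
  shows "((6*x^5 - 12*x^3 + 6*m^2*x) * (2*e*d) - (x^6 - 3*x^4 + 3*m^2*x^2 - m^2) * (2*(2*x*d + e*(4*x^3))))
          / (2*e*d)^2 * x
     = (1/2 - 2 * (m*x*e/d)^2) / (e/(2*x))^2"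
  using assms(1,2,3) apply (simp add: field_simps power2_eq_square)
  apply (simp only: de) by algebra

lemma exp_mult_pow: "exp (real n * (r::real)) = exp r ^ n"
  by (simp add: exp_of_nat_mult)
lemma exp2: "exp (2 * (r::real)) = exp r ^ 2" using exp_mult_pow[of 2 r] by simp
lemma exp4: "exp (4 * (r::real)) = exp r ^ 4" using exp_mult_pow[of 4 r] by simp
lemma exp6: "exp (6 * (r::real)) = exp r ^ 6" using exp_mult_pow[of 6 r] by simp
lemma expm2: "exp (- 2 * (r::real)) = 1 / exp r ^ 2" using exp2[of "-r"] by (simp add: exp_minus field_simps)
lemma sinh_x: "sinh (r::real) = (exp r ^ 2 - 1) / (2 * exp r)"
  by (simp add: sinh_def exp_minus field_simps power2_eq_square)
lemma cosh_x: "cosh (r::real) = (exp r ^ 2 + 1) / (2 * exp r)"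
  by (simp add: cosh_def exp_minus field_simps power2_eq_square)

lemma d_pos: fixes r m :: real assumes "r > 0" "m^2 \<le> 1" shows "exp r ^ 4 - m^2 > 0"
proof -
  have "1 < exp r" using assms by simp
  then have "exp r ^ 4 > 1" by (rule one_less_power) simp
  thus ?thesis using assms by linarith
qed

lemma fF_x: fixes r m :: real assumes "r > 0" "m^2 \<le> 1"
  shows "fF m r = m * exp r * (exp r ^ 2 - 1) / (exp r ^ 4 - m^2)"
  using d_pos[OF assms] unfolding fF_def exp2 exp4 sinh_x by (simp add: field_simps power2_eq_square)

lemma hH_x: fixes r m :: real assumes "r > 0" "m^2 \<le> 1"
  shows "hH m r = (exp r^6 - 3*exp r^4 + 3*m^2*exp r^2 - m^2)/(2*(exp r^2-1)*(exp r^4-m^2))"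
proof -
  define x where "x = exp r"
  have x1: "x > 1" using assms by (simp add: x_def)
  have d: "x^4 - m^2 \<noteq> 0" using d_pos[OF assms] x_def by simp
  have e: "x^2 - 1 \<noteq> 0" using x1 by (smt (verit) one_less_power zero_less_numeral)
  have cs: "1 - cosh r / sinh r = - 2 / (x^2 - 1)"
    unfolding cosh_x sinh_x x_def[symmetric] using e x1 by (simp add: field_simps)
  have num: "m^2*(1-3*x^2) - x^6*(1-3*(1/x^2)) = -(x^6 - 3*x^4 + 3*m^2*x^2 - m^2)"
    using x1 by (simp add: field_simps)
  define E where "E = x^2 - 1"
  define D where "D = x^4 - m^2"
  define N where "N = x^6 - 3*x^4 + 3*m^2*x^2 - m^2"
  have "hH m r = (1/4) * (-2/E) * (-N / D)"
    unfolding hH_def cs exp2 exp4 exp6 expm2 x_def[symmetric] num E_def D_def N_def by simp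
  also have "\<dots> = N / (2*E*D)" using d e unfolding E_def[symmetric] D_def[symmetric]
    by (simp add: field_simps)
  finally show ?thesis unfolding N_def E_def D_def x_def .
qed

lemma Fx_deriv: fixes x m :: real assumes "x^4 - m^2 \<noteq> 0"
  shows "((\<lambda>x. m*x*(x^2-1)/(x^4-m^2)) has_real_derivative
     (m*((3*x^2-1)*(x^4-m^2) - x*(x^2-1)*(4*x^3))/(x^4-m^2)^2)) (at x)"
  apply (rule derivative_eq_intros refl)+
  using assms apply simp
  using assms apply (simp add: power2_eq_square)
  apply algebra
  done

lemma Hx_deriv: fixes x m :: real assumes "x^4 - m^2 \<noteq> 0" "x^2 - 1 \<noteq> 0"
  shows "((\<lambda>x. (x^6 - 3*x^4 + 3*m^2*x^2 - m^2)/(2*(x^2-1)*(x^4-m^2))) has_real_derivative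
     (((6*x^5 - 12*x^3 + 6*m^2*x) * (2*(x^2-1)*(x^4-m^2)) - (x^6 - 3*x^4 + 3*m^2*x^2 - m^2) * (2*(2*x*(x^4-m^2) + (x^2-1)*(4*x^3))))
          / (2*(x^2-1)*(x^4-m^2))^2)) (at x)"
  apply (rule derivative_eq_intros refl)+
  using assms apply simp
  using assms apply (simp add: power2_eq_square)
  apply algebra
  done

lemma fF_deriv: fixes r m :: real assumes "r > 0" "m^2 \<le> 1"
  shows "(fF m has_real_derivative (-2 * fF m r * hH m r)) (at r)"
proof -
  define x where "x = exp r"
  have x1: "x > 1" using assms by (simp add: x_def)
  have d: "x^4 - m^2 \<noteq> 0" using d_pos[OF assms] x_def by simp
  have e: "x^2 - 1 \<noteq> 0" using x1 by (smt (verit) one_less_power zero_less_numeral)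
  have D: "((\<lambda>r. (\<lambda>x. m*x*(x^2-1)/(x^4-m^2)) (exp r)) has_real_derivative
     (m*((3*x^2-1)*(x^4-m^2) - x*(x^2-1)*(4*x^3))/(x^4-m^2)^2) * exp r) (at r)"
    using DERIV_chain2[OF Fx_deriv[OF d, unfolded x_def] DERIV_exp] unfolding x_def .
  have D2: "(fF m has_real_derivative
     (m*((3*x^2-1)*(x^4-m^2) - x*(x^2-1)*(4*x^3))/(x^4-m^2)^2) * exp r) (at r)"
    by (rule has_field_derivative_transform_within_open[OF D, of "{0<..}"])
       (use assms in \<open>auto simp: fF_x\<close>)
  have eq: "(m*((3*x^2-1)*(x^4-m^2) - x*(x^2-1)*(4*x^3))/(x^4-m^2)^2) * exp r = -2 * fF m r * hH m r"
    unfolding fF_x[OF assms] hH_x[OF assms] x_def[symmetric]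
    by (rule F_id0[OF e d refl refl])
  show ?thesis using D2 eq by simp
qed

lemma hH_deriv: fixes r m :: real assumes "r > 0" "m^2 \<le> 1"
  shows "(hH m has_real_derivative ((1/2 - 2 * (fF m r)^2) / (sinh r)^2)) (at r)"
proof -
  define x where "x = exp r"
  have x1: "x > 1" using assms by (simp add: x_def)
  have d: "x^4 - m^2 \<noteq> 0" using d_pos[OF assms] x_def by simp
  have e: "x^2 - 1 \<noteq> 0" using x1 by (smt (verit) one_less_power zero_less_numeral)
  have D: "((\<lambda>r. (\<lambda>x. (x^6 - 3*x^4 + 3*m^2*x^2 - m^2)/(2*(x^2-1)*(x^4-m^2))) (exp r)) has_real_derivative
     (((6*x^5 - 12*x^3 + 6*m^2*x) * (2*(x^2-1)*(x^4-m^2)) - (x^6 - 3*x^4 + 3*m^2*x^2 - m^2) * (2*(2*x*(x^4-m^2) + (x^2-1)*(4*x^3))))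
          / (2*(x^2-1)*(x^4-m^2))^2) * exp r) (at r)"
    using DERIV_chain2[OF Hx_deriv[OF d e, unfolded x_def] DERIV_exp] unfolding x_def .
  have D2: "(hH m has_real_derivative
     (((6*x^5 - 12*x^3 + 6*m^2*x) * (2*(x^2-1)*(x^4-m^2)) - (x^6 - 3*x^4 + 3*m^2*x^2 - m^2) * (2*(2*x*(x^4-m^2) + (x^2-1)*(4*x^3))))
          / (2*(x^2-1)*(x^4-m^2))^2) * exp r) (at r)"
    by (rule has_field_derivative_transform_within_open[OF D, of "{0<..}"])
       (use assms in \<open>auto simp: hH_x\<close>)
  have eq: "(((6*x^5 - 12*x^3 + 6*m^2*x) * (2*(x^2-1)*(x^4-m^2)) - (x^6 - 3*x^4 + 3*m^2*x^2 - m^2) * (2*(2*x*(x^4-m^2) + (x^2-1)*(4*x^3))))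
          / (2*(x^2-1)*(x^4-m^2))^2) * exp r = (1/2 - 2 * (fF m r)^2) / (sinh r)^2"
    unfolding fF_x[OF assms] sinh_x x_def[symmetric]
    by (rule H_id0[OF e d _ refl refl]) (use x1 in simp)
  show ?thesis using D2 eq by simp
qed

definition AA :: "real \<Rightarrow> real^3 \<Rightarrow> 3 \<Rightarrow> su2" where
  "AA m p a = (if a = 1 then 0
               else if a = 2 then - (fF m (p$1)) *\<^sub>R qk
               else (cos (p$2) / 2) *\<^sub>R qi + (fF m (p$1) * sin (p$2)) *\<^sub>R qj)"
definition PP :: "real \<Rightarrow> real^3 \<Rightarrow> su2" where
  "PP m p = hH m (p$1) *\<^sub>R qi"

lemma dcos_gen: "((\<lambda>s. cos s / 2) has_real_derivative (- sin th / 2)) (at (th::real))"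
  using DERIV_cdivide[OF DERIV_cos[of th], of 2] by simp

lemma qcross: "cross3 qi qj = qk" "cross3 qj qi = - qk" "cross3 qj qk = qi" "cross3 qk qj = - qi"
  "cross3 qk qi = qj" "cross3 qi qk = - qj"
  unfolding qi_def qj_def qk_def by (simp_all add: cross_basis)

lemma case1_id: fixes x y z :: real
  assumes "x \<noteq> 0" "y \<noteq> 0"
  shows "(1/2 - 2*z^2)/x^2 = -((4*(y*(z*z)) - y)/(2*x^2*y))"
  using assms by (simp add: field_simps power2_eq_square)

lemma bog:
  fixes m :: real
  assumes p: "p \<in> U_polar" and m: "m^2 \<le> 1"
  shows "cov_deriv (AA m) (PP m) p a = - hodge2 g_H3 (curvature (AA m)) p a"
proof -
  define r where "r = p$1"
  define th where "th = p$2"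
  have r: "r > 0" using p by (simp add: U_polar_def r_def)
  have s: "sin th > 0" using p by (simp add: U_polar_def th_def sin_gt_zero)
  have S: "sinh r > 0" using r by simp
  have Snz: "sinh r \<noteq> 0" and snz: "sin th \<noteq> 0" using S s by auto
  have df: "(fF m has_real_derivative (-2 * fF m r * hH m r)) (at (p$1))"
    using fF_deriv[OF r m] by (simp add: r_def)
  have dh: "(hH m has_real_derivative ((1/2 - 2 * (fF m r)^2) / (sinh r)^2)) (at (p$1))"
    using hH_deriv[OF r m] by (simp add: r_def)
  have P1: "pd 1 (PP m) p = ((1/2 - 2 * (fF m r)^2) / (sinh r)^2) *\<^sub>R qi"
    using pd_shift2[where Ga="hH m" and Gb="\<lambda>_. 0" and va=qi and vb=0, OF _ dh DERIV_const]
    by (simp add: PP_def comp_shift axis_def)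
  have P2: "pd 2 (PP m) p = 0" by (rule pd_const) (simp add: PP_def comp_shift axis_def)
  have P3: "pd 3 (PP m) p = 0" by (rule pd_const) (simp add: PP_def comp_shift axis_def)
  have A1: "\<And>i. pd i (\<lambda>q. AA m q 1) p = 0" by (rule pd_const) (simp add: AA_def)
  have A21: "pd 1 (\<lambda>q. AA m q 2) p = (2 * fF m r * hH m r) *\<^sub>R qk"
    using pd_shift2[where Ga="\<lambda>s. - fF m s" and Gb="\<lambda>_. 0" and va=qk and vb=0, OF _ DERIV_minus[OF df] DERIV_const]
    by (simp add: AA_def comp_shift axis_def)
  have A22: "pd 2 (\<lambda>q. AA m q 2) p = 0" by (rule pd_const) (simp add: AA_def comp_shift axis_def)
  have A23: "pd 3 (\<lambda>q. AA m q 2) p = 0" by (rule pd_const) (simp add: AA_def comp_shift axis_def)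
  have A31: "pd 1 (\<lambda>q. AA m q 3) p = (-2 * fF m r * hH m r * sin th) *\<^sub>R qj"
    using pd_shift2[where Ga="\<lambda>s. cos (p$2) / 2" and Gb="\<lambda>s. fF m s * sin (p$2)" and va=qi and vb=qj,
        OF _ DERIV_const DERIV_cmult_right[OF df]]
    by (simp add: AA_def comp_shift axis_def th_def)
  have dcos: "((\<lambda>s. cos s / 2) has_real_derivative (- sin th / 2)) (at (p$2))"
    unfolding th_def by (rule dcos_gen)
  have dsin: "((\<lambda>s. fF m r * sin s) has_real_derivative (fF m r * cos th)) (at (p$2))"
    unfolding th_def by (rule derivative_eq_intros refl)+ simp
  have A32: "pd 2 (\<lambda>q. AA m q 3) p = (- sin th / 2) *\<^sub>R qi + (fF m r * cos th) *\<^sub>R qj"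
    using pd_shift2[where Ga="\<lambda>s. cos s / 2" and Gb="\<lambda>s. fF m r * sin s" and va=qi and vb=qj,
        OF _ dcos dsin]
    by (simp add: AA_def comp_shift axis_def r_def)
  have A33: "pd 3 (\<lambda>q. AA m q 3) p = 0" by (rule pd_const) (simp add: AA_def comp_shift axis_def)
  have AA: "AA m p 1 = 0" "AA m p 2 = - (fF m r) *\<^sub>R qk"
     "AA m p 3 = (cos th / 2) *\<^sub>R qi + (fF m r * sin th) *\<^sub>R qj"
    by (simp_all add: AA_def r_def th_def)
  have PPp: "PP m p = hH m r *\<^sub>R qi" by (simp add: PP_def r_def)
  have HS: "hodge2 g_H3 F p 1 = (1 / (2 * (sinh r)^2 * sin th)) *\<^sub>R (F p 2 3 - F p 3 2)"
    "hodge2 g_H3 F p 2 = (1 / (2 * sin th)) *\<^sub>R (F p 3 1 - F p 1 3)"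
    "hodge2 g_H3 F p 3 = (sin th / 2) *\<^sub>R (F p 1 2 - F p 2 1)" for F
    using hodge_H3[OF p] unfolding r_def th_def by auto
  note simps2 = cov_deriv_def curvature_def HS P1 P2 P3 A1 A21 A22 A23 A31 A32 A33 AA PPp
    lie_bracket_def cross_mult_left cross_mult_right cross_add_left cross_add_right qcross
  note simps = cov_deriv_def curvature_def HS P1 P2 P3 A1 A21 A22 A23 A31 A32 A33 AA PPp
    lie_bracket_def vec_eq_iff forall_3 cross3_def qi_def qj_def qk_def axis_def
  consider "a = 1" | "a = 2" | "a = 3" using exhaust_3 by blast
  then show ?thesis
  proof cases
    case 1
    then show ?thesis apply (simp add: simps) by (rule case1_id[OF Snz snz])
  next
    case 2
    then show ?thesis apply (simp add: simps2) using snz by (simp add: vec_eq_iff algebra_simps)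
  next
    case 3
    then show ?thesis apply (simp add: simps2) by (simp add: vec_eq_iff algebra_simps)
  qed
qed

lemma beta_sq: fixes \<beta> :: real assumes "0 < \<beta>" "\<beta> \<le> 2" shows "(\<beta> - 1)\<^sup>2 \<le> 1"
proof -
  have "\<bar>\<beta> - 1\<bar> \<le> 1" using assms by linarith
  then show ?thesis by (simp add: abs_square_le_1)
qed

lemma hH_lim: fixes m :: real assumes "m\<^sup>2 \<le> 1" shows "(hH m \<longlongrightarrow> 1/2) at_top"
proof -
  have H: "((\<lambda>x::real. (x^6 - 3*x^4 + 3*m^2*x^2 - m^2)/(2*(x^2-1)*(x^4-m^2))) \<longlongrightarrow> 1/2) at_top"
    by real_asymp
  have H2: "((\<lambda>r. (exp r^6 - 3*exp r^4 + 3*m^2*exp r^2 - m^2)/(2*(exp r^2-1)*(exp r^4-m^2))) \<longlongrightarrow> 1/2) at_top"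
    by (rule filterlim_compose[OF H exp_at_top])
  have ev: "eventually (\<lambda>r. (exp r^6 - 3*exp r^4 + 3*m^2*exp r^2 - m^2)/(2*(exp r^2-1)*(exp r^4-m^2)) = hH m r) at_top"
    using eventually_gt_at_top[of 0] by eventually_elim (simp add: hH_x[OF _ assms])
  show ?thesis using tendsto_cong[OF ev] H2 by simp
qed

theorem mainTheorem2:
  fixes \<beta> :: real and A :: "real^3 \<Rightarrow> 3 \<Rightarrow> su2" and Phi :: "real^3 \<Rightarrow> su2"
    and f :: "real \<Rightarrow> real"
  assumes "0 < \<beta>" and "\<beta> \<le> 2"
  defines "f \<equiv> (\<lambda>r. 2 * (\<beta> - 1) * exp (2 * r) * sinh r / (exp (4 * r) - (\<beta> - 1)\<^sup>2))"
  defines "A \<equiv> (\<lambda>p a. if a = 1 then 0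
               else if a = 2 then - (f (p$1)) *\<^sub>R qk
               else (cos (p$2) / 2) *\<^sub>R qi + (f (p$1) * sin (p$2)) *\<^sub>R qj)"
  defines "Phi \<equiv> (\<lambda>p. ((1 / 4) * (1 - cosh (p$1) / sinh (p$1)) *
               (((\<beta> - 1)\<^sup>2 * (1 - 3 * exp (2 * p$1)) - exp (6 * p$1) * (1 - 3 * exp (- 2 * p$1)))
                / (exp (4 * p$1) - (\<beta> - 1)\<^sup>2))) *\<^sub>R qi)"
  shows "(\<forall>p\<in>U_polar. \<forall>a. cov_deriv A Phi p a = - hodge2 g_H3 (curvature A) p a)
    \<and> (\<forall>\<theta> \<phi>. 0 < \<theta> \<and> \<theta> < pi \<longrightarrow>
         ((\<lambda>r. norm (Phi (vector [r, \<theta>, \<phi>]))) \<longlongrightarrow> 1 / 2) at_top)"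
proof -
  have m: "(\<beta> - 1)\<^sup>2 \<le> 1" using beta_sq[OF assms(1,2)] .
  have Aeq: "A = AA (\<beta> - 1)" unfolding A_def f_def AA_def fF_def by (intro ext) simp
  have Peq: "Phi = PP (\<beta> - 1)" unfolding Phi_def PP_def hH_def by (intro ext) simp
  have part1: "\<forall>p\<in>U_polar. \<forall>a. cov_deriv A Phi p a = - hodge2 g_H3 (curvature A) p a"
    unfolding Aeq Peq using bog[OF _ m] by blast
  have part2: "((\<lambda>r. norm (Phi (vector [r, \<theta>, \<phi>]))) \<longlongrightarrow> 1 / 2) at_top" for \<theta> \<phi>
  proof -
    have n: "norm (Phi (vector [r, \<theta>, \<phi>])) = \<bar>hH (\<beta> - 1) r\<bar>" for r
      unfolding Peq PP_def qi_def by simp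
    have "((\<lambda>r. \<bar>hH (\<beta> - 1) r\<bar>) \<longlongrightarrow> \<bar>1/2\<bar>) at_top"
      by (rule tendsto_rabs[OF hH_lim[OF m]])
    then show ?thesis unfolding n by simp
  qed
  show ?thesis using part1 part2 by blast
qed

end
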